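(* Let $S$ be a distributive $\{\vee,0\}$-semilattice. Then the set of all elements $\varepsilon\in S$ such that $S$ satisfies $\mathrm{URP}_1$ at $\varepsilon$ is closed under the join operation.
   Context: A join-semilattice $S$ is distributive if whenever $c\leq a\vee b$ in $S$ there exist $a'\leq a$, $b'\leq b$ with $c=a'\vee b'$. Let $S$ be a $\{\vee,0\}$-semilattice and $\varepsilon\in S$. $S$ satisfies $\mathrm{URP}_1$ at $\varepsilon$ if for every family $((\alpha_i,\beta_i))_{i\in I}$ of elements of $S\times S$ with $\alpha_i\vee\beta_i=\varepsilon$ for all $i$, there exist a family $((\alpha_i^*,\beta_i^* ))_{i\in I}$ in $S\times S$ and a family $(\gamma_{i,j})_{(i,j)\in I\times I}$ in $S$ such that for all $i,j,k\in I$: (i) $\alpha_i^*\leq\alpha_i$, $\beta_i^*\leq\beta_i$, $\alpha_i^*\vee\beta_i^*=\varepsilon$; (ii) $\gamma_{i,j}\leq\alpha_i^*$ and $\gamma_{i,j}\leq\beta_j^*$; (iii) $\alpha_i^*\leq\alpha_j^*\vee\gamma_{i,j}$ and $\beta_j^*\leq\beta_i^*\vee\gamma_{i,j}$; (iv) $\gamma_{i,k}\leq\gamma_{i,j}\vee\gamma_{j,k}$. *)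

theory Defs
  imports Main
begin

definition distributive_sl :: "'a::bounded_semilattice_sup_bot itself \<Rightarrow> bool" where
  "distributive_sl _ \<longleftrightarrow>
     (\<forall>a b c :: 'a. c \<le> sup a b \<longrightarrow> (\<exists>a' b'. a' \<le> a \<and> b' \<le> b \<and> c = sup a' b'))"

definition URP1_at :: "'i itself \<Rightarrow> 'a::bounded_semilattice_sup_bot \<Rightarrow> bool" where
  "URP1_at _ eps \<longleftrightarrow>
     (\<forall>(I :: 'i set) (\<alpha> :: 'i \<Rightarrow> 'a) (\<beta> :: 'i \<Rightarrow> 'a).
        (\<forall>i\<in>I. sup (\<alpha> i) (\<beta> i) = eps) \<longrightarrow>
        (\<exists>(\<alpha>s :: 'i \<Rightarrow> 'a) (\<beta>s :: 'i \<Rightarrow> 'a) (\<gamma> :: 'i \<Rightarrow> 'i \<Rightarrow> 'a).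
           (\<forall>i\<in>I. \<alpha>s i \<le> \<alpha> i \<and> \<beta>s i \<le> \<beta> i \<and> sup (\<alpha>s i) (\<beta>s i) = eps) \<and>
           (\<forall>i\<in>I. \<forall>j\<in>I. \<gamma> i j \<le> \<alpha>s i \<and> \<gamma> i j \<le> \<beta>s j) \<and>
           (\<forall>i\<in>I. \<forall>j\<in>I. \<alpha>s i \<le> sup (\<alpha>s j) (\<gamma> i j) \<and> \<beta>s j \<le> sup (\<beta>s i) (\<gamma> i j)) \<and>
           (\<forall>i\<in>I. \<forall>j\<in>I. \<forall>k\<in>I. \<gamma> i k \<le> sup (\<gamma> i j) (\<gamma> j k))))"

end

theory Submission
  imports Defs
begin

lemma split_dist:
  assumes "distributive_sl TYPE('a::bounded_semilattice_sup_bot)"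
    and "\<forall>i\<in>I. sup (\<alpha> i) (\<beta> i) = sup a (b::'a)"
  shows "\<exists>x y. \<forall>i\<in>I. x i \<le> \<alpha> i \<and> y i \<le> \<beta> i \<and> sup (x i) (y i) = a"
proof -
  have "\<forall>i\<in>I. \<exists>p. fst p \<le> \<alpha> i \<and> snd p \<le> \<beta> i \<and> sup (fst p) (snd p) = a"
  proof
    fix i assume "i \<in> I"
    then have "a \<le> sup (\<alpha> i) (\<beta> i)" using assms(2) by simp
    then obtain x y where "x \<le> \<alpha> i" "y \<le> \<beta> i" "a = sup x y"
      using assms(1) unfolding distributive_sl_def by blast
    then show "\<exists>p. fst p \<le> \<alpha> i \<and> snd p \<le> \<beta> i \<and> sup (fst p) (snd p) = a"
      by (intro exI[of _ "(x,y)"]) simp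
  qed
  then obtain f where "\<forall>i\<in>I. fst (f i) \<le> \<alpha> i \<and> snd (f i) \<le> \<beta> i \<and> sup (fst (f i)) (snd (f i)) = a"
    by (metis bchoice)
  then show ?thesis by (intro exI[of _ "fst o f"] exI[of _ "snd o f"]) simp
qed

lemma sup_mono4:
  fixes x y p q r s :: "'a::semilattice_sup"
  assumes "x \<le> sup p q" "y \<le> sup r s"
  shows "sup x y \<le> sup (sup p r) (sup q s)"
proof -
  have "sup p q \<le> sup (sup p r) (sup q s)" by (simp add: le_supI1 le_supI2)
  moreover have "sup r s \<le> sup (sup p r) (sup q s)" by (simp add: le_supI1 le_supI2)
  ultimately show ?thesis using assms by (meson le_sup_iff order_trans)
qed

theorem proposition1p4:
  assumes "distributive_sl TYPE('a::bounded_semilattice_sup_bot)"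
  shows "\<forall>a\<in>{eps :: 'a. URP1_at TYPE('i) eps}. \<forall>b\<in>{eps :: 'a. URP1_at TYPE('i) eps}.
           sup a b \<in> {eps :: 'a. URP1_at TYPE('i) eps}"
proof (intro ballI)
  fix a b :: 'a
  assume "a \<in> {eps :: 'a. URP1_at TYPE('i) eps}" "b \<in> {eps :: 'a. URP1_at TYPE('i) eps}"
  then have A: "URP1_at TYPE('i) a" and B: "URP1_at TYPE('i) b" by auto
  show "sup a b \<in> {eps :: 'a. URP1_at TYPE('i) eps}"
    unfolding mem_Collect_eq URP1_at_def
  proof (intro allI impI)
    fix I :: "'i set" and \<alpha> \<beta> :: "'i \<Rightarrow> 'a"
    assume H: "\<forall>i\<in>I. sup (\<alpha> i) (\<beta> i) = sup a b"
    obtain x1 y1 where 1: "\<forall>i\<in>I. x1 i \<le> \<alpha> i \<and> y1 i \<le> \<beta> i \<and> sup (x1 i) (y1 i) = a"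
      using split_dist[OF assms H] by blast
    have H2: "\<forall>i\<in>I. sup (\<alpha> i) (\<beta> i) = sup b a" using H by (simp add: sup_commute)
    obtain x2 y2 where 2: "\<forall>i\<in>I. x2 i \<le> \<alpha> i \<and> y2 i \<le> \<beta> i \<and> sup (x2 i) (y2 i) = b"
      using split_dist[OF assms H2] by blast
    obtain as1 bs1 g1 where
      a1: "\<forall>i\<in>I. as1 i \<le> x1 i \<and> bs1 i \<le> y1 i \<and> sup (as1 i) (bs1 i) = a"
      and a2: "\<forall>i\<in>I. \<forall>j\<in>I. g1 i j \<le> as1 i \<and> g1 i j \<le> bs1 j"
      and a3: "\<forall>i\<in>I. \<forall>j\<in>I. as1 i \<le> sup (as1 j) (g1 i j) \<and> bs1 j \<le> sup (bs1 i) (g1 i j)"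
      and a4: "\<forall>i\<in>I. \<forall>j\<in>I. \<forall>k\<in>I. g1 i k \<le> sup (g1 i j) (g1 j k)"
      using A[unfolded URP1_at_def, rule_format, of I x1 y1] 1 by auto
    obtain as2 bs2 g2 where
      b1: "\<forall>i\<in>I. as2 i \<le> x2 i \<and> bs2 i \<le> y2 i \<and> sup (as2 i) (bs2 i) = b"
      and b2: "\<forall>i\<in>I. \<forall>j\<in>I. g2 i j \<le> as2 i \<and> g2 i j \<le> bs2 j"
      and b3: "\<forall>i\<in>I. \<forall>j\<in>I. as2 i \<le> sup (as2 j) (g2 i j) \<and> bs2 j \<le> sup (bs2 i) (g2 i j)"
      and b4: "\<forall>i\<in>I. \<forall>j\<in>I. \<forall>k\<in>I. g2 i k \<le> sup (g2 i j) (g2 j k)"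
      using B[unfolded URP1_at_def, rule_format, of I x2 y2] 2 by auto
    define A2 where "A2 = (\<lambda>i. sup (as1 i) (as2 i))"
    define B2 where "B2 = (\<lambda>i. sup (bs1 i) (bs2 i))"
    define G where "G = (\<lambda>i j. sup (g1 i j) (g2 i j))"
    have c1: "\<forall>i\<in>I. A2 i \<le> \<alpha> i \<and> B2 i \<le> \<beta> i \<and> sup (A2 i) (B2 i) = sup a b"
    proof
      fix i assume i: "i \<in> I"
      have "as1 i \<le> \<alpha> i" "as2 i \<le> \<alpha> i" "bs1 i \<le> \<beta> i" "bs2 i \<le> \<beta> i"
        using a1 b1 1 2 i order_trans by blast+
      moreover have "sup (A2 i) (B2 i) = sup a b"
        unfolding A2_def B2_def using a1 b1 i by (metis sup_assoc sup_left_commute)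
      ultimately show "A2 i \<le> \<alpha> i \<and> B2 i \<le> \<beta> i \<and> sup (A2 i) (B2 i) = sup a b"
        unfolding A2_def B2_def by simp
    qed
    have c2: "\<forall>i\<in>I. \<forall>j\<in>I. G i j \<le> A2 i \<and> G i j \<le> B2 j"
      unfolding A2_def B2_def G_def using a2 b2 by (simp add: le_supI1 le_supI2)
    have c3: "\<forall>i\<in>I. \<forall>j\<in>I. A2 i \<le> sup (A2 j) (G i j) \<and> B2 j \<le> sup (B2 i) (G i j)"
      unfolding A2_def B2_def G_def using a3 b3 by (blast intro: sup_mono4)
    have c4: "\<forall>i\<in>I. \<forall>j\<in>I. \<forall>k\<in>I. G i k \<le> sup (G i j) (G j k)"
      unfolding G_def using a4 b4 by (blast intro: sup_mono4)
    show "\<exists>\<alpha>s \<beta>s \<gamma>.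
           (\<forall>i\<in>I. \<alpha>s i \<le> \<alpha> i \<and> \<beta>s i \<le> \<beta> i \<and> sup (\<alpha>s i) (\<beta>s i) = sup a b) \<and>
           (\<forall>i\<in>I. \<forall>j\<in>I. \<gamma> i j \<le> \<alpha>s i \<and> \<gamma> i j \<le> \<beta>s j) \<and>
           (\<forall>i\<in>I. \<forall>j\<in>I. \<alpha>s i \<le> sup (\<alpha>s j) (\<gamma> i j) \<and> \<beta>s j \<le> sup (\<beta>s i) (\<gamma> i j)) \<and>
           (\<forall>i\<in>I. \<forall>j\<in>I. \<forall>k\<in>I. \<gamma> i k \<le> sup (\<gamma> i j) (\<gamma> j k))"
      using c1 c2 c3 c4 by blast
  qed
qed

end
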